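(* Let $\Sigma$ be an alphabet and $A$ a nontrivial finite abelian group. There is no subgroup $G\le\llbracket\Sigma^{\mathbb{Z}}\rrbracket$ isomorphic to $\mathbb{Z}^2$ whose action is move-$A$ithful.
   Context: An alphabet is a finite set with at least two elements. $\llbracket\Sigma^{\mathbb{Z}}\rrbracket$ is the group of homeomorphisms $f$ of $\Sigma^{\mathbb{Z}}$ with a continuous cocycle $c_f:\Sigma^{\mathbb{Z}}\to\mathbb{Z}$ such that $f(x)=\sigma^{c_f(x)}(x)$, where $\sigma(x)_i=x_{i+1}$; for $g\in G$ write $c_g$ for its cocycle. For a finite abelian group $A$, the action of $G\le\llbracket\Sigma^{\mathbb{Z}}\rrbracket$ is move-$A$ithful if for every map $\beta:G\to A$ with finite nonempty support there exist $x\in\Sigma^{\mathbb{Z}}$ and $\gamma:\mathbb{Z}\to\mathrm{End}(A)$ with $\sum_{g\in G}\gamma(c_g(x))(\beta(g))\neq0_A$. *)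

theory Defs
  imports "HOL-Analysis.Analysis"
begin

definition shift_space :: "(int \<Rightarrow> 'a) topology" where
  "shift_space = product_topology (\<lambda>_::int. discrete_topology (UNIV::'a set)) UNIV"

text \<open>sigma^n, where sigma(x)_i = x_(i+1); so (sigma^n x)_i = x_(i+n).\<close>
definition shiftp :: "int \<Rightarrow> (int \<Rightarrow> 'a) \<Rightarrow> (int \<Rightarrow> 'a)" where
  "shiftp n x = (\<lambda>i. x (i + n))"

definition is_cocycle :: "((int \<Rightarrow> 'a) \<Rightarrow> (int \<Rightarrow> 'a)) \<Rightarrow> ((int \<Rightarrow> 'a) \<Rightarrow> int) \<Rightarrow> bool" where
  "is_cocycle f c \<longleftrightarrow> continuous_map shift_space (discrete_topology (UNIV::int set)) c
      \<and> (\<forall>x. f x = shiftp (c x) x)"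

definition tfg :: "((int \<Rightarrow> 'a) \<Rightarrow> (int \<Rightarrow> 'a)) set" where
  "tfg = {f. homeomorphic_map shift_space shift_space f \<and> (\<exists>c. is_cocycle f c)}"

text \<open>The cocycle c_f (unique, since aperiodic points are dense).\<close>
definition cocycle :: "((int \<Rightarrow> 'a) \<Rightarrow> (int \<Rightarrow> 'a)) \<Rightarrow> (int \<Rightarrow> 'a) \<Rightarrow> int" where
  "cocycle f = (SOME c. is_cocycle f c)"

definition is_endo :: "('b::ab_group_add \<Rightarrow> 'b) \<Rightarrow> bool" where
  "is_endo e \<longleftrightarrow> (\<forall>a b. e (a + b) = e a + e b)"

definition move_Aithful :: "'b::{ab_group_add,finite} itself \<Rightarrow> ((int \<Rightarrow> 'a) \<Rightarrow> (int \<Rightarrow> 'a)) set \<Rightarrow> bool" where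
  "move_Aithful _ G \<longleftrightarrow>
     (\<forall>\<beta> :: ((int \<Rightarrow> 'a) \<Rightarrow> (int \<Rightarrow> 'a)) \<Rightarrow> 'b.
        let S = {g \<in> G. \<beta> g \<noteq> 0} in
        finite S \<and> S \<noteq> {} \<longrightarrow>
        (\<exists>x \<gamma>. (\<forall>n. is_endo (\<gamma> n)) \<and> (\<Sum>g\<in>S. \<gamma> (cocycle g x) (\<beta> g)) \<noteq> 0))"

end

theory Submission
  imports Defs "HOL-Library.Groups_Big_Fun"
begin


definition aper :: "(int \<Rightarrow> 'a) \<Rightarrow> bool" where
  "aper y \<longleftrightarrow> (\<forall>p q. shiftp p y = shiftp q y \<longrightarrow> p = q)"

lemma topspace_shift[simp]: "topspace (shift_space :: (int \<Rightarrow> 'a) topology) = UNIV"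
  unfolding shift_space_def by simp

lemma shiftp_shiftp[simp]: "shiftp a (shiftp b x) = shiftp (a + b) x"
  unfolding shiftp_def by (simp add: ac_simps)

lemma shiftp_0[simp]: "shiftp 0 x = x"
  unfolding shiftp_def by simp

lemma aper_shiftp: "aper x \<Longrightarrow> aper (shiftp k x)"
  unfolding aper_def
proof (intro allI impI)
  fix p q assume a: "\<forall>p q. shiftp p x = shiftp q x \<longrightarrow> p = q"
    and "shiftp p (shiftp k x) = shiftp q (shiftp k x)"
  then have "shiftp (p + k) x = shiftp (q + k) x" by simp
  then have "p + k = q + k" using a by blast
  then show "p = q" by simp
qed

lemma cocycle_good: assumes "f \<in> tfg" shows "is_cocycle f (cocycle f)"
proof -
  obtain c where "is_cocycle f c" using assms unfolding tfg_def by auto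
  then show ?thesis unfolding cocycle_def by (rule someI[where P="is_cocycle f"])
qed

lemma compact_shift: "compact_space (shift_space :: (int \<Rightarrow> 'a::finite) topology)"
  unfolding shift_space_def
  by (simp add: compact_space_product_topology compact_space_discrete_topology)

lemma cont_bounded:
  assumes "continuous_map (shift_space :: (int \<Rightarrow> 'a::finite) topology) (discrete_topology (UNIV::int set)) c"
  shows "\<exists>R::nat. \<forall>x. \<bar>c x\<bar> \<le> int R"
proof -
  have "compactin (discrete_topology (UNIV::int set)) (c ` topspace shift_space)"
    using image_compactin[OF _ assms] compact_shift unfolding compact_space_def by simp
  then have fin: "finite (range c)" by (simp add: compactin_discrete_topology)
  define R where "R = nat (Max (abs ` range c))"
  have "\<bar>c x\<bar> \<le> int R" for x
  proof -
    have "\<bar>c x\<bar> \<le> Max (abs ` range c)" using fin by (intro Max_ge) auto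
    then show ?thesis unfolding R_def by linarith
  qed
  then show ?thesis by blast
qed

lemma cont_locconst:
  assumes "continuous_map (shift_space :: (int \<Rightarrow> 'a) topology) (discrete_topology (UNIV::int set)) c"
  shows "openin shift_space {y. c y = c x}"
proof -
  have "openin shift_space {y \<in> topspace shift_space. c y \<in> {c x}}"
    using assms by (intro openin_continuous_map_preimage) auto
  then show ?thesis by simp
qed

lemma dense_aper:
  assumes "CARD('a::finite) \<ge> 2" and U: "openin (shift_space :: (int \<Rightarrow> 'a) topology) U" and "x \<in> U"
  shows "\<exists>y\<in>U. aper y"
proof -
  obtain V where fin: "finite {i \<in> (UNIV::int set). V i \<noteq> topspace (discrete_topology (UNIV::'a set))}"
    and xV: "x \<in> Pi\<^sub>E UNIV V" and VU: "Pi\<^sub>E UNIV V \<subseteq> U"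
    using U \<open>x \<in> U\<close> unfolding shift_space_def openin_product_topology_alt by blast
  define W where "W = {i. V i \<noteq> UNIV}"
  have finW: "finite W" using fin unfolding W_def by simp
  obtain a0 a1 :: 'a where a01: "a0 \<noteq> a1"
  proof -
    have "\<not> (\<forall>a b::'a. a = b)"
    proof
      assume "\<forall>a b::'a. a = b"
      then have "card (UNIV::'a set) \<le> 1" by (simp add: card_le_Suc0_iff_eq)
      with assms(1) show False by simp
    qed
    then show ?thesis using that by blast
  qed
  define K where "K = Max (insert 0 W) + 2"
  have WK: "w \<in> W \<Longrightarrow> w < K - 1" for w
  proof -
    assume "w \<in> W"
    then have "w \<le> Max (insert 0 W)" using finW by (intro Max_ge) auto
    then show ?thesis unfolding K_def by linarith
  qed
  define y where "y = (\<lambda>i. if i \<in> W then x i else if i \<ge> K then a1 else a0)"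
  have "y \<in> Pi\<^sub>E UNIV V"
    using xV by (auto simp: y_def W_def PiE_iff)
  then have "y \<in> U" using VU by blast
  moreover have "aper y"
    unfolding aper_def
  proof (intro allI impI)
    fix p q
    assume "shiftp p y = shiftp q y"
    then have eq: "y (i + p) = y (i + q)" for i
      unfolding shiftp_def by metis
    define d where "d = p - q"
    have per: "y (j + d) = y j" for j
      using eq[of "j - q"] by (simp add: d_def algebra_simps)
    have y0: "y (K - 1) = a0" using WK by (auto simp: y_def)
    have y1: "j \<ge> K \<Longrightarrow> y j = a1" for j using WK[of j] by (auto simp: y_def)
    show "p = q"
    proof (rule ccontr)
      assume "p \<noteq> q"
      then consider "d > 0" | "d < 0" unfolding d_def by linarith
      then show False
      proof cases
        case 1
        then show False using per[of "K - 1"] y0 y1[of "K - 1 + d"] a01 by simp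
      next
        case 2
        then show False using per[of "K - 1 - d"] y0 y1[of "K - 1 - d"] a01 by simp
      qed
    qed
  qed
  ultimately show ?thesis by blast
qed




locale Z2 =
  fixes \<phi> :: "int \<times> int \<Rightarrow> ((int \<Rightarrow> 'a::finite) \<Rightarrow> (int \<Rightarrow> 'a))"
  assumes card: "CARD('a) \<ge> 2"
    and tfg: "range \<phi> \<subseteq> tfg"
    and hom0: "\<forall>m n p q. \<phi> (m + p, n + q) = \<phi> (m, n) \<circ> \<phi> (p, q)"
begin

definition D :: "(int \<Rightarrow> 'a) \<Rightarrow> int \<times> int \<Rightarrow> int" where
  "D x v = cocycle (\<phi> v) x"

lemma hom: "\<phi> (u + v) = \<phi> u \<circ> \<phi> v"
  using hom0 by (cases u, cases v) auto

lemma hom_ap: "\<phi> (u + v) x = \<phi> u (\<phi> v x)"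
  using hom by simp

lemma coc: "is_cocycle (\<phi> v) (cocycle (\<phi> v))"
  by (rule cocycle_good) (use tfg in auto)

lemma phiD: "\<phi> v x = shiftp (D x v) x"
  using coc unfolding is_cocycle_def D_def by blast

lemma contD: "continuous_map shift_space (discrete_topology (UNIV::int set)) (\<lambda>x. D x v)"
  using coc unfolding is_cocycle_def D_def by blast

lemma inj_phi: "inj (\<phi> v)"
proof -
  have "homeomorphic_map shift_space shift_space (\<phi> v)" using tfg unfolding tfg_def by blast
  then show ?thesis using homeomorphic_imp_injective_map by fastforce
qed

lemma phi0: "\<phi> 0 x = x"
proof -
  have "\<phi> 0 (\<phi> 0 x) = \<phi> 0 x" using hom_ap[of 0 0 x] by simp
  then show ?thesis using inj_phi[of 0] by (meson injD)
qed

lemma comm: "\<phi> u (\<phi> v x) = \<phi> v (\<phi> u x)"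
  using hom_ap[of u v x] hom_ap[of v u x] by (simp add: add.commute)

lemma aper_phi: "aper x \<Longrightarrow> aper (\<phi> v x)"
  by (simp add: phiD aper_shiftp)

lemma cocycle_id: assumes "aper x" shows "D x (u + t) = D (\<phi> t x) u + D x t"
proof -
  have "shiftp (D x (u + t)) x = \<phi> (u + t) x" by (simp add: phiD)
  also have "\<dots> = \<phi> u (\<phi> t x)" by (simp add: hom_ap)
  also have "\<dots> = shiftp (D (\<phi> t x) u + D x t) x" by (simp add: phiD[of u] phiD[of t])
  finally show ?thesis using assms unfolding aper_def by (elim allE impE)
qed

lemma D_fix: assumes "aper x" "\<phi> t x = x" shows "D x t = 0"
proof -
  have "shiftp (D x t) x = shiftp 0 x" using assms(2) phiD[of t x] by simp
  then show ?thesis using assms(1) unfolding aper_def by (elim allE impE)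
qed

lemma bound: "\<exists>R::nat. \<forall>x. \<bar>D x (1,0)\<bar> \<le> int R \<and> \<bar>D x (0,1)\<bar> \<le> int R"
proof -
  obtain R1 where R1: "\<forall>x. \<bar>D x (1,0)\<bar> \<le> int R1" using cont_bounded[OF contD] by blast
  obtain R2 where R2: "\<forall>x. \<bar>D x (0,1)\<bar> \<le> int R2" using cont_bounded[OF contD] by blast
  show ?thesis
  proof (intro exI[of _ "R1 + R2"] allI conjI)
    fix x
    show "\<bar>D x (1,0)\<bar> \<le> int (R1 + R2)" using R1[rule_format, of x] by simp
    show "\<bar>D x (0,1)\<bar> \<le> int (R1 + R2)" using R2[rule_format, of x] by simp
  qed
qed

lemma abs_add_le: "\<bar>a\<bar> \<le> x \<Longrightarrow> \<bar>b\<bar> \<le> y \<Longrightarrow> \<bar>(a::int) + b\<bar> \<le> y + x"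
  by (simp add: abs_le_iff)

lemma box_bound:
  assumes R: "\<forall>x. \<bar>D x (1,0)\<bar> \<le> int R \<and> \<bar>D x (0,1)\<bar> \<le> int R" and "aper x"
  shows "\<bar>D x (int m, int n)\<bar> \<le> int (m + n) * int R"
proof (induction m)
  case 0
  show ?case
  proof (induction n)
    case 0
    then show ?case using D_fix[OF \<open>aper x\<close>, of 0] phi0 by (simp add: zero_prod_def)
  next
    case (Suc n)
    have "D x (0, int (Suc n)) = D (\<phi> (0, int n) x) (0,1) + D x (0, int n)"
      using cocycle_id[OF \<open>aper x\<close>, of "(0,1)" "(0, int n)"] by simp
    then show ?case using abs_add_le[OF Suc conjunct2[OF R[rule_format, of "\<phi> (0, int n) x"]]] by (simp add: algebra_simps)
  qed
next
  case (Suc m)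
  have "D x (int (Suc m), int n) = D (\<phi> (int m, int n) x) (1,0) + D x (int m, int n)"
    using cocycle_id[OF \<open>aper x\<close>, of "(1,0)" "(int m, int n)"] by simp
  then show ?case using abs_add_le[OF Suc conjunct1[OF R[rule_format, of "\<phi> (int m, int n) x"]]] by (simp add: algebra_simps)
qed

end



definition pos :: "int \<times> int \<Rightarrow> bool" where
  "pos s \<longleftrightarrow> fst s > 0 \<or> (fst s = 0 \<and> snd s > 0)"

lemma pos_add: "pos u \<Longrightarrow> pos w \<Longrightarrow> pos (u + w)"
  unfolding pos_def by auto

fun bL :: "'b::ab_group_add \<Rightarrow> (int \<times> int) list \<Rightarrow> int \<times> int \<Rightarrow> 'b" where
  "bL a [] v = (if v = 0 then a else 0)"
| "bL a (t # L) v = bL a L v - bL a L (v - t)"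

lemma bL_fin: "finite {v. bL a L v \<noteq> 0}"
proof (induction L)
  case Nil
  have "{v. bL a [] v \<noteq> 0} \<subseteq> {0}" by auto
  then show ?case using finite_subset by blast
next
  case (Cons t L)
  have "{v. bL a (t # L) v \<noteq> 0} \<subseteq> {v. bL a L v \<noteq> 0} \<union> (\<lambda>u. u + t) ` {v. bL a L v \<noteq> 0}"
  proof
    fix v assume "v \<in> {v. bL a (t # L) v \<noteq> 0}"
    then have "bL a L v \<noteq> 0 \<or> bL a L (v - t) \<noteq> 0" by auto
    then show "v \<in> {v. bL a L v \<noteq> 0} \<union> (\<lambda>u. u + t) ` {v. bL a L v \<noteq> 0}"
    proof
      assume "bL a L (v - t) \<noteq> 0"
      then have "v = (v - t) + t \<and> v - t \<in> {v. bL a L v \<noteq> 0}" by simp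
      then show ?thesis by blast
    qed simp
  qed
  then show ?case using Cons finite_subset by blast
qed

lemma bL_neg: "(\<forall>t\<in>set L. pos t) \<Longrightarrow> pos (- v) \<Longrightarrow> bL a L v = 0"
proof (induction L arbitrary: v)
  case Nil
  then show ?case by (auto simp: pos_def)
next
  case (Cons t L)
  have "pos (- (v - t))" using pos_add[of "- v" t] Cons.prems by (simp add: algebra_simps)
  then show ?case using Cons by simp
qed

lemma bL_0: "(\<forall>t\<in>set L. pos t) \<Longrightarrow> bL a L 0 = a"
proof (induction L)
  case Nil
  then show ?case by simp
next
  case (Cons t L)
  have "bL a L (0 - t) = 0" using bL_neg[of L "0 - t" a] Cons.prems by simp
  then show ?case using Cons by simp
qed

lemma SA_diff:
  fixes f g :: "'c \<Rightarrow> 'b::ab_group_add"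
  assumes "finite {v. f v \<noteq> 0}" "finite {v. g v \<noteq> 0}"
  shows "Sum_any (\<lambda>v. f v - g v) = Sum_any f - Sum_any g"
proof -
  let ?A = "{v. f v \<noteq> 0} \<union> {v. g v \<noteq> 0}"
  have fin: "finite ?A" using assms by simp
  have "Sum_any (\<lambda>v. f v - g v) = sum (\<lambda>v. f v - g v) ?A"
    by (rule Sum_any.expand_superset[OF fin]) auto
  moreover have "Sum_any f = sum f ?A" by (rule Sum_any.expand_superset[OF fin]) auto
  moreover have "Sum_any g = sum g ?A" by (rule Sum_any.expand_superset[OF fin]) auto
  ultimately show ?thesis by (simp add: sum_subtractf)
qed

lemma SA_shift:
  fixes g :: "int \<times> int \<Rightarrow> 'b::ab_group_add"
  shows "Sum_any (\<lambda>v. g (v - t)) = Sum_any g"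
proof -
  have "bij (\<lambda>v::int\<times>int. v - t)"
  proof (rule bij_betwI')
    fix y :: "int \<times> int" show "\<exists>x\<in>UNIV. y = x - t" by (intro bexI[of _ "y + t"]) auto
  qed auto
  then have "Sum_any g = Sum_any (\<lambda>v. g (v - t))"
    by (rule Sum_any.reindex_cong) (simp add: comp_def)
  then show ?thesis by simp
qed

lemma endo_0: "is_endo e \<Longrightarrow> e 0 = 0"
  unfolding is_endo_def by (metis add.right_neutral add_left_cancel)

lemma endo_sum: assumes "is_endo e" "finite A" shows "e (sum f A) = sum (\<lambda>x. e (f x)) A"
  using assms(2)
proof (induction A rule: finite_induct)
  case empty then show ?case using assms(1) by (simp add: endo_0)
next
  case (insert x F)
  then show ?case using assms(1) unfolding is_endo_def by simp
qed

context Z2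
begin

lemma key:
  fixes a :: "'b::ab_group_add"
  shows "aper x \<Longrightarrow> (\<exists>t\<in>set L. \<phi> t x = x) \<Longrightarrow>
    Sum_any (\<lambda>v. if D x v = n then bL a L v else 0) = 0"
proof (induction L arbitrary: x n)
  case Nil
  then show ?case by simp
next
  case (Cons t L)
  let ?b = "bL a L"
  have f1: "finite {v. (if D x v = n then ?b v else 0) \<noteq> 0}"
    by (rule finite_subset[OF _ bL_fin[of a L]]) auto
  have f2: "finite {v. (if D x v = n then ?b (v - t) else 0) \<noteq> 0}"
  proof (rule finite_subset[OF _ finite_imageI[OF bL_fin[of a L], of "\<lambda>u. u + t"]])
    show "{v. (if D x v = n then ?b (v - t) else 0) \<noteq> 0} \<subseteq> (\<lambda>u. u + t) ` {v. ?b v \<noteq> 0}"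
    proof
      fix v assume "v \<in> {v. (if D x v = n then ?b (v - t) else 0) \<noteq> 0}"
      then have "v = (v - t) + t \<and> v - t \<in> {v. ?b v \<noteq> 0}" by (auto split: if_splits)
      then show "v \<in> (\<lambda>u. u + t) ` {v. ?b v \<noteq> 0}" by blast
    qed
  qed
  have "Sum_any (\<lambda>v. if D x v = n then bL a (t # L) v else 0)
      = Sum_any (\<lambda>v. (if D x v = n then ?b v else 0) - (if D x v = n then ?b (v - t) else 0))"
    by (rule Sum_any.cong) simp
  also have "\<dots> = Sum_any (\<lambda>v. if D x v = n then ?b v else 0)
      - Sum_any (\<lambda>v. if D x v = n then ?b (v - t) else 0)"
    by (rule SA_diff[OF f1 f2])
  also have "Sum_any (\<lambda>v. if D x v = n then ?b (v - t) else 0)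
      = Sum_any (\<lambda>u. if D x (u + t) = n then ?b u else 0)"
    using SA_shift[of "\<lambda>u. if D x (u + t) = n then ?b u else 0" t] by simp
  also have "\<dots> = Sum_any (\<lambda>u. if D (\<phi> t x) u = n - D x t then ?b u else 0)"
    by (rule Sum_any.cong) (auto simp: cocycle_id[OF Cons.prems(1)])
  finally have eq: "Sum_any (\<lambda>v. if D x v = n then bL a (t # L) v else 0)
     = Sum_any (\<lambda>v. if D x v = n then ?b v else 0)
      - Sum_any (\<lambda>u. if D (\<phi> t x) u = n - D x t then ?b u else 0)" .
  show ?case
  proof (cases "\<phi> t x = x")
    case True
    then have "D x t = 0" using D_fix[OF Cons.prems(1)] by blast
    then show ?thesis using eq True by simp
  next
    case False
    then obtain s where s: "s \<in> set L" "\<phi> s x = x" using Cons.prems(2) by auto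
    have "\<phi> s (\<phi> t x) = \<phi> t x" using s(2) comm[of s t x] by simp
    then have "Sum_any (\<lambda>u. if D (\<phi> t x) u = n - D x t then ?b u else 0) = 0"
      using Cons.IH[of "\<phi> t x" "n - D x t"] aper_phi[OF Cons.prems(1)] s(1) by blast
    moreover have "Sum_any (\<lambda>v. if D x v = n then ?b v else 0) = 0"
      using Cons.IH[of x n] Cons.prems(1) s by blast
    ultimately show ?thesis using eq by simp
  qed
qed

lemma fs_all:
  fixes b :: "int \<times> int \<Rightarrow> 'b::ab_group_add"
  assumes V: "finite V" "\<And>v. b v \<noteq> 0 \<Longrightarrow> v \<in> V"
    and H: "\<And>y n. aper y \<Longrightarrow> Sum_any (\<lambda>v. if D y v = n then b v else 0) = 0"
  shows "Sum_any (\<lambda>v. if D x v = n then b v else 0) = 0"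
proof -
  let ?U = "(\<Inter>v\<in>V. {y. D y v = D x v}) \<inter> topspace shift_space"
  have "openin shift_space ?U"
    using V(1) cont_locconst[OF contD] by (intro openin_INT) auto
  moreover have "x \<in> ?U" by simp
  ultimately obtain y where y: "y \<in> ?U" "aper y" using dense_aper[OF card] by blast
  have "Sum_any (\<lambda>v. if D x v = n then b v else 0) = Sum_any (\<lambda>v. if D y v = n then b v else 0)"
  proof (rule Sum_any.cong)
    fix v show "(if D x v = n then b v else 0) = (if D y v = n then b v else 0)"
      using y(1) V(2)[of v] by (cases "b v = 0") auto
  qed
  then show ?thesis using H[OF y(2)] by simp
qed

end



context Z2
begin

lemma stab:
  assumes R: "\<forall>x. \<bar>D x (1,0)\<bar> \<le> int R \<and> \<bar>D x (0,1)\<bar> \<le> int R" and ap: "aper x"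
  shows "\<exists>s. pos s \<and> \<bar>fst s\<bar> \<le> int (4*R+1) \<and> \<bar>snd s\<bar> \<le> int (4*R+1) \<and> \<phi> s x = x"
proof -
  define N where "N = 4*R+1"
  define B where "B = {0..N} \<times> {0..N}"
  define f where "f = (\<lambda>p::nat\<times>nat. D x (int (fst p), int (snd p)))"
  define M where "M = 2 * int N * int R"
  have img: "f ` B \<subseteq> {-M..M}"
  proof
    fix y assume "y \<in> f ` B"
    then obtain p where p: "p \<in> B" "y = f p" by blast
    have "\<bar>f p\<bar> \<le> int (fst p + snd p) * int R"
      unfolding f_def using box_bound[OF R ap] by blast
    also have "\<dots> \<le> int (2 * N) * int R"
      using p(1) unfolding B_def by (intro mult_right_mono) auto
    finally show "y \<in> {-M..M}" using p(2) unfolding M_def by auto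
  qed
  have "card (f ` B) \<le> card {-M..M}" by (rule card_mono[OF _ img]) simp
  also have "\<dots> = nat (2 * M + 1)" by simp
  also have "\<dots> = 4 * N * R + 1" unfolding M_def by (simp add: nat_add_distrib nat_mult_distrib)
  also have "\<dots> < (N + 1) * (N + 1)" unfolding N_def by (simp add: algebra_simps)
  also have "\<dots> = card B" unfolding B_def by (simp add: card_cartesian_product)
  finally have "\<not> inj_on f B" using pigeonhole by blast
  then obtain p q where pq: "p \<in> B" "q \<in> B" "p \<noteq> q" "f p = f q" unfolding inj_on_def by blast
  define v where "v = (int (fst p), int (snd p))"
  define w where "w = (int (fst q), int (snd q))"
  define s0 where "s0 = v - w"
  have "\<phi> v x = \<phi> w x" using pq(4) unfolding f_def v_def w_def by (simp add: phiD[of _ x])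
  then have "\<phi> w (\<phi> s0 x) = \<phi> w x" using hom_ap[of w s0 x] unfolding s0_def by simp
  then have fix0: "\<phi> s0 x = x" using inj_phi[of w] by (meson injD)
  have nz: "s0 \<noteq> 0" using pq(3) unfolding s0_def v_def w_def by (auto simp: prod_eq_iff)
  have bnd: "\<bar>fst s0\<bar> \<le> int N \<and> \<bar>snd s0\<bar> \<le> int N"
    using pq(1,2) unfolding s0_def v_def w_def B_def by auto
  show ?thesis
  proof (cases "pos s0")
    case True
    then show ?thesis using fix0 bnd unfolding N_def by blast
  next
    case False
    then have "pos (- s0)" using nz unfolding pos_def by (auto simp: prod_eq_iff)
    moreover have "\<phi> (- s0) x = x"
      using hom_ap[of "- s0" s0 x] fix0 phi0 by simp
    ultimately show ?thesis using bnd unfolding N_def by (intro exI[of _ "- s0"]) auto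
  qed
qed

end

theorem mainTheorem15:
  fixes \<phi> :: "int \<times> int \<Rightarrow> ((int \<Rightarrow> 'a::finite) \<Rightarrow> (int \<Rightarrow> 'a))"
  assumes "CARD('a) \<ge> 2"
    and "\<exists>a::'b::{ab_group_add,finite}. a \<noteq> 0"
    and "range \<phi> \<subseteq> tfg"
    and "inj \<phi>"
    and "\<forall>m n p q. \<phi> (m + p, n + q) = \<phi> (m, n) \<circ> \<phi> (p, q)"
  shows "\<not> move_Aithful TYPE('b) (range \<phi>)"
proof -
  obtain a :: 'b where a: "a \<noteq> 0" using assms(2) by blast
  interpret Z2 \<phi> using assms(1,3,5) by unfold_locales auto
  obtain R where R: "\<forall>x. \<bar>D x (1,0)\<bar> \<le> int R \<and> \<bar>D x (0,1)\<bar> \<le> int R" using bound by blast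
  define N where "N = int (4*R+1)"
  define Sset where "Sset = {s. pos s \<and> \<bar>fst s\<bar> \<le> N \<and> \<bar>snd s\<bar> \<le> N}"
  have "Sset \<subseteq> {-N..N} \<times> {-N..N}" unfolding Sset_def by auto
  then have "finite Sset" using finite_subset by blast
  then obtain L where L: "set L = Sset" using finite_list by blast
  have posL: "\<forall>t\<in>set L. pos t" using L unfolding Sset_def by auto
  define b where "b = bL a L"
  define V where "V = {v. b v \<noteq> 0}"
  have finV: "finite V" unfolding V_def b_def by (rule bL_fin)
  have fib: "Sum_any (\<lambda>v. if D x v = n then b v else 0) = 0" for x n
  proof (rule fs_all[OF finV])
    show "\<And>v. b v \<noteq> 0 \<Longrightarrow> v \<in> V" unfolding V_def by simp
    fix y :: "int \<Rightarrow> 'a" and n assume ap: "aper y"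
    obtain s where "pos s \<and> \<bar>fst s\<bar> \<le> N \<and> \<bar>snd s\<bar> \<le> N \<and> \<phi> s y = y"
      using stab[OF R ap] unfolding N_def by blast
    then have "\<exists>t\<in>set L. \<phi> t y = y" using L unfolding Sset_def by blast
    then show "Sum_any (\<lambda>v. if D y v = n then b v else 0) = 0"
      unfolding b_def by (rule key[OF ap])
  qed
  define \<beta> where "\<beta> = (\<lambda>g. b (inv \<phi> g))"
  have S: "{g \<in> range \<phi>. \<beta> g \<noteq> 0} = \<phi> ` V"
    unfolding \<beta>_def V_def using inv_f_f[OF assms(4)] by auto
  have b0: "b 0 = a" unfolding b_def by (rule bL_0[OF posL])
  have "\<phi> 0 \<in> \<phi> ` V" unfolding V_def using b0 a by auto
  then have Sne: "\<phi> ` V \<noteq> {}" by blast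
  have zero: "(\<Sum>g\<in>\<phi> ` V. \<gamma> (cocycle g x) (\<beta> g)) = 0" if endo: "\<forall>n. is_endo (\<gamma> n)" for x \<gamma>
  proof -
    have "(\<Sum>g\<in>\<phi> ` V. \<gamma> (cocycle g x) (\<beta> g)) = (\<Sum>v\<in>V. \<gamma> (D x v) (b v))"
      using sum.reindex[of \<phi> V "\<lambda>g. \<gamma> (cocycle g x) (\<beta> g)"] inj_on_subset[OF assms(4)]
      unfolding \<beta>_def D_def using inv_f_f[OF assms(4)] by simp
    also have "\<dots> = (\<Sum>n\<in>(\<lambda>v. D x v) ` V. \<Sum>v\<in>{v\<in>V. D x v = n}. \<gamma> (D x v) (b v))"
      by (rule sum.image_gen[OF finV])
    also have "\<dots> = (\<Sum>n\<in>(\<lambda>v. D x v) ` V. 0)"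
    proof (rule sum.cong[OF refl])
      fix n
      have "(\<Sum>v\<in>{v\<in>V. D x v = n}. \<gamma> (D x v) (b v)) = (\<Sum>v\<in>{v\<in>V. D x v = n}. \<gamma> n (b v))"
        by (rule sum.cong) auto
      also have "\<dots> = \<gamma> n (\<Sum>v\<in>{v\<in>V. D x v = n}. b v)"
        using endo_sum[of "\<gamma> n" "{v\<in>V. D x v = n}" b] endo finV by simp
      also have "(\<Sum>v\<in>{v\<in>V. D x v = n}. b v) = (\<Sum>v\<in>V. if D x v = n then b v else 0)"
        by (rule sum.inter_filter[OF finV])
      also have "\<dots> = Sum_any (\<lambda>v. if D x v = n then b v else 0)"
        by (rule Sum_any.expand_superset[OF finV, symmetric]) (auto simp: V_def)
      also have "\<dots> = 0" by (rule fib)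
      finally show "(\<Sum>v\<in>{v\<in>V. D x v = n}. \<gamma> (D x v) (b v)) = 0"
        using endo_0[of "\<gamma> n"] endo by simp
    qed
    finally show ?thesis by simp
  qed
  show ?thesis
    unfolding move_Aithful_def Let_def
  proof
    assume H: "\<forall>\<beta>::((int \<Rightarrow> 'a) \<Rightarrow> (int \<Rightarrow> 'a)) \<Rightarrow> 'b.
        finite {g \<in> range \<phi>. \<beta> g \<noteq> 0} \<and> {g \<in> range \<phi>. \<beta> g \<noteq> 0} \<noteq> {} \<longrightarrow>
        (\<exists>x \<gamma>. (\<forall>n. is_endo (\<gamma> n)) \<and> (\<Sum>g\<in>{g \<in> range \<phi>. \<beta> g \<noteq> 0}. \<gamma> (cocycle g x) (\<beta> g)) \<noteq> 0)"
    have "finite {g \<in> range \<phi>. \<beta> g \<noteq> 0} \<and> {g \<in> range \<phi>. \<beta> g \<noteq> 0} \<noteq> {}"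
      unfolding S using finV Sne by simp
    then obtain x \<gamma> where "\<forall>n. is_endo (\<gamma> n)"
      "(\<Sum>g\<in>{g \<in> range \<phi>. \<beta> g \<noteq> 0}. \<gamma> (cocycle g x) (\<beta> g)) \<noteq> 0"
      using H by blast
    then show False unfolding S using zero by blast
  qed
qed


end
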